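(* For every $\mu\in\mathcal M_0(\mathbb Z)$ there exists $\mathbf r_\mu\in[0,1]^{\mathbb Z}$ such that the randomized Markovian stopping time $\tau(\mathbf r_\mu)$ solves the Skorokhod embedding problem in the filtration $\mathbb F^{S,\boldsymbol\xi}$: that is, $\tau(\mathbf r_\mu)<\infty$ a.s., $S_{\tau(\mathbf r_\mu)}\sim\mu$, and the stopped process $(S_{t\wedge\tau(\mathbf r_\mu)})_{t\ge0}$ is uniformly integrable.
   Context: Time is discrete, $t\in\{0,1,2,\dots\}$. $S=(S_t)_{t\ge0}$ is a simple symmetric random walk on $\mathbb Z$ with $S_0=0$. $\mathcal M_0(\mathbb Z)$ denotes the set of probability measures on $\mathbb Z$ with finite first moment and mean zero. A stopping time $\tau$ is called uniformly integrable (UI) if the stopped process $(S_{t\wedge\tau})_{t\ge0}$ is uniformly integrable. For a filtration $\mathbb F$ (with respect to which $S$ is adapted and $S_{t+1}-S_t$ is independent of $\mathcal F_t$), $\mathrm{SEP}(\mathbb F,\mu)$ denotes the set of $\mathbb F$-stopping times $\tau$ with $S_\tau\sim\mu$ and $\tau$ UI. Randomized Markovian stopping times: for $\mathbf r=(r_x)_{x\in\mathbb Z}\in[0,1]^{\mathbb Z}$, let $\boldsymbol\xi=\{\xi_{t,x}\}_{t\ge0,x\in\mathbb Z}$ be Bernoulli random variables, mutually independent and independent of $S$, with $\mathbb P(\xi_{t,x}=0)=r_x=1-\mathbb P(\xi_{t,x}=1)$, and set $\tau(\mathbf r):=\inf\{t\ge0:\xi_{t,S_t}=0\}$. This is a stopping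 time for the filtration $\mathbb F^{S,\boldsymbol\xi}=(\mathcal F^{S,\boldsymbol\xi}_t)_{t\ge 0}$, $\mathcal F^{S,\boldsymbol\xi}_t:=\sigma(S_u,\xi_{u,S_u}:u\le t)$. The law of $S_{\tau(\mathbf r)}$ depends only on $\mathbf r$. *)

theory Defs
  imports "HOL-Probability.Probability"
begin

text \<open>Canonical probability space carrying the simple symmetric random walk
  (through its i.i.d. uniform increments in {-1,1}) and the independent
  Bernoulli family xi(t,x) with P(xi(t,x) = 0) = r x. We encode xi(t,x)=1 as True
  and xi(t,x)=0 as False.\<close>

definition srw_xi_space :: "(int \<Rightarrow> real) \<Rightarrow> ((nat \<Rightarrow> int) \<times> (nat \<times> int \<Rightarrow> bool)) measure" where
  "srw_xi_space r =
     (PiM UNIV (\<lambda>_::nat. measure_pmf (pmf_of_set {-1, 1::int})))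
     \<Otimes>\<^sub>M (PiM UNIV (\<lambda>(t::nat, x::int). measure_pmf (bernoulli_pmf (1 - r x))))"

definition walk :: "(nat \<Rightarrow> int) \<times> (nat \<times> int \<Rightarrow> bool) \<Rightarrow> nat \<Rightarrow> int" where
  "walk \<omega> t = (\<Sum>u<t. fst \<omega> u)"

definition tau_r :: "(nat \<Rightarrow> int) \<times> (nat \<times> int \<Rightarrow> bool) \<Rightarrow> enat" where
  "tau_r \<omega> = (if \<exists>t. \<not> snd \<omega> (t, walk \<omega> t)
               then enat (LEAST t. \<not> snd \<omega> (t, walk \<omega> t)) else \<infinity>)"

definition stopped_walk :: "(nat \<Rightarrow> int) \<times> (nat \<times> int \<Rightarrow> bool) \<Rightarrow> nat \<Rightarrow> int" where
  "stopped_walk \<omega> t = walk \<omega> (the_enat (min (enat t) (tau_r \<omega>)))"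

definition unif_integrable :: "'a measure \<Rightarrow> (nat \<Rightarrow> 'a \<Rightarrow> real) \<Rightarrow> bool" where
  "unif_integrable M X \<longleftrightarrow>
     (\<forall>e>0. \<exists>K. \<forall>t. (\<integral>\<^sup>+ \<omega>. ennreal (\<bar>X t \<omega>\<bar>) * indicator {\<omega>. \<bar>X t \<omega>\<bar> > K} \<omega> \<partial>M) < ennreal e)"

definition mean_zero_int :: "int pmf \<Rightarrow> bool" where
  "mean_zero_int \<mu> \<longleftrightarrow> integrable (measure_pmf \<mu>) real_of_int
      \<and> measure_pmf.expectation \<mu> real_of_int = 0"

end

theory Submission
  imports Defs
begin


lemma conv_zero:
  fixes k :: "int \<Rightarrow> real"
  assumes nn: "\<And>x. k x \<ge> 0" and cv: "\<And>x. 2 * k x \<le> k (x-1) + k (x+1)"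
    and l1: "\<And>e x0. e > 0 \<Longrightarrow> \<exists>n\<ge>x0. k n < e"
    and l2: "\<And>e x0. e > 0 \<Longrightarrow> \<exists>n\<le>x0. k n < e"
  shows "k x = 0"
proof (rule ccontr)
  assume "k x \<noteq> 0"
  with nn have pos: "k x > 0" by (simp add: order_le_neq_trans)
  show False
  proof (cases "k (x+1) \<ge> k x")
    case True
    have inc: "k (x + int n + 1) - k (x + int n) \<ge> 0" for n
    proof (induction n)
      case 0 then show ?case using True by simp
    next
      case (Suc n)
      have "2 * k (x + int n + 1) \<le> k (x + int n) + k (x + int n + 2)"
        using cv[of "x + int n + 1"] by (simp add: algebra_simps)
      then show ?case using Suc by (simp add: algebra_simps)
    qed
    have ge: "k (x + int n) \<ge> k x" for n
    proof (induction n)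
      case (Suc n) then show ?case using inc[of n] by (simp add: algebra_simps)
    qed simp
    obtain n where n: "n \<ge> x" "k n < k x" using l1[OF pos, of x] by blast
    have "n = x + int (nat (n - x))" using n by simp
    then have "k n \<ge> k x" using ge[of "nat (n - x)"] by metis
    then show False using n by simp
  next
    case False
    have dec: "k (x - int n - 1) - k (x - int n) > 0" for n
    proof (induction n)
      case 0
      have "2 * k x \<le> k (x-1) + k (x+1)" by (rule cv)
      then show ?case using False by simp
    next
      case (Suc n)
      have "2 * k (x - int n - 1) \<le> k (x - int n - 2) + k (x - int n)"
        using cv[of "x - int n - 1"] by (simp add: algebra_simps)
      then show ?case using Suc by (simp add: algebra_simps)
    qed
    have ge: "k (x - int n) \<ge> k x" for n
    proof (induction n)
      case (Suc n) then show ?case using dec[of n] by (simp add: algebra_simps)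
    qed simp
    obtain n where n: "n \<le> x" "k n < k x" using l2[OF pos, of x] by blast
    have "n = x - int (nat (x - n))" using n by simp
    then have "k n \<ge> k x" using ge[of "nat (x - n)"] by metis
    then show False using n by simp
  qed
qed

primrec av :: "(int \<Rightarrow> real) \<Rightarrow> nat \<Rightarrow> int \<Rightarrow> real" where
  "av r 0 x = (if x = 0 then 1 else 0)"
| "av r (Suc t) x = ((1 - r (x-1)) * av r t (x-1) + (1 - r (x+1)) * av r t (x+1)) / 2"

lemma av_nonneg: assumes "\<And>x. r x \<le> 1" shows "av r t x \<ge> 0"
  using assms by (induction t arbitrary: x) (auto intro!: add_nonneg_nonneg mult_nonneg_nonneg)

lemma av_supp: "\<bar>x\<bar> > int t \<Longrightarrow> av r t x = 0"
  by (induction t arbitrary: x) auto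

lemma green:
  fixes r h G :: "int \<Rightarrow> real"
  assumes r01: "\<And>x. 0 \<le> r x \<and> r x \<le> 1"
    and hG: "\<And>x. h x = (1 - r x) * G x"
    and Geq: "\<And>x. G x = (if x = 0 then 1 else 0) + (h (x-1) + h (x+1)) / 2"
    and hnn: "\<And>x. h x \<ge> 0"
    and l1: "\<And>e x0. e > 0 \<Longrightarrow> \<exists>n\<ge>x0. h n < e"
    and l2: "\<And>e x0. e > 0 \<Longrightarrow> \<exists>n\<le>x0. h n < e"
  shows "summable (\<lambda>t. av r t x) \<and> (\<Sum>t. av r t x) = G x"
proof -
  have Gnn: "G x \<ge> 0" for x using Geq[of x] hnn[of "x-1"] hnn[of "x+1"] by simp
  have avn: "av r t x \<ge> 0" for t x using av_nonneg r01 by blast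
  have gp: "(\<Sum>t<T. av r t x) \<le> G x" for T x
  proof (induction T arbitrary: x)
    case 0 then show ?case using Gnn by simp
  next
    case (Suc T)
    have "(\<Sum>t<Suc T. av r t x) = av r 0 x + (\<Sum>t<T. av r (Suc t) x)"
      by (rule sum.lessThan_Suc_shift)
    also have "(\<Sum>t<T. av r (Suc t) x) = ((1 - r (x-1)) * (\<Sum>t<T. av r t (x-1))
         + (1 - r (x+1)) * (\<Sum>t<T. av r t (x+1))) / 2"
      by (simp add: sum_divide_distrib[symmetric] sum_distrib_left sum.distrib)
    also have "\<dots> \<le> ((1 - r (x-1)) * G (x-1) + (1 - r (x+1)) * G (x+1)) / 2"
      using Suc.IH[of "x-1"] Suc.IH[of "x+1"] r01[of "x-1"] r01[of "x+1"]
      by (intro divide_right_mono add_mono mult_left_mono) auto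
    finally show ?case using Geq[of x] hG[of "x-1"] hG[of "x+1"] by simp
  qed
  have sm: "summable (\<lambda>t. av r t x)" for x
    using gp avn by (intro summableI_nonneg_bounded) auto
  define g where "g x = (\<Sum>t. av r t x)" for x
  have gs: "(\<lambda>t. av r t x) sums g x" for x using sm g_def by (simp add: summable_sums)
  have gle: "g x \<le> G x" for x
    unfolding g_def using gp sm by (intro suminf_le_const) auto
  have geq: "g x = (if x = 0 then 1 else 0) + ((1 - r (x-1)) * g (x-1) + (1 - r (x+1)) * g (x+1)) / 2" for x
  proof -
    have "(\<lambda>t. av r (Suc t) x) sums (((1 - r (x-1)) * g (x-1) + (1 - r (x+1)) * g (x+1)) / 2)"
      unfolding av.simps
      by (intro sums_divide sums_add sums_mult gs)
    then have "(\<lambda>t. av r t x) sums (((1 - r (x-1)) * g (x-1) + (1 - r (x+1)) * g (x+1)) / 2 + av r 0 x)"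
      by (subst sums_Suc_iff[symmetric]) (simp del: av.simps)
    then show ?thesis using gs[of x] sums_unique2 by fastforce
  qed
  define D where "D x = G x - g x" for x
  define k where "k x = (1 - r x) * D x" for x
  have Dnn: "D x \<ge> 0" for x using gle[of x] D_def by simp
  have knn: "k x \<ge> 0" for x using Dnn r01 k_def by simp
  have Dk: "D x = (k (x-1) + k (x+1)) / 2" for x
  proof -
    have e1: "G x = (if x = 0 then 1 else 0) + ((1 - r (x-1)) * G (x-1) + (1 - r (x+1)) * G (x+1)) / 2"
      using Geq[of x] by (simp only: hG)
    show ?thesis using e1 geq[of x] unfolding D_def k_def
      by (simp add: algebra_simps add_divide_distrib diff_divide_distrib)
  qed
  have kD: "k x \<le> D x" for x using Dnn[of x] r01[of x] unfolding k_def
    by (simp add: mult_left_le_one_le)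
  have kh: "k x \<le> h x" for x
  proof -
    have "g x \<ge> 0" unfolding g_def using sm avn by (simp add: suminf_nonneg)
    then show ?thesis using r01[of x] hG[of x] unfolding k_def D_def
      by (simp add: algebra_simps mult_left_le)
  qed
  have k0: "k x = 0" for x
  proof (rule conv_zero)
    show "k x \<ge> 0" for x by (rule knn)
    show "2 * k x \<le> k (x-1) + k (x+1)" for x using kD[of x] Dk[of x] by simp
    show "\<exists>n\<ge>x0. k n < e" if "e > 0" for e x0 using l1[OF that, of x0] kh by (meson le_less_trans)
    show "\<exists>n\<le>x0. k n < e" if "e > 0" for e x0 using l2[OF that, of x0] kh by (meson le_less_trans)
  qed
  have "D x = 0" using Dk[of x] k0 by simp
  then show ?thesis using sm g_def D_def by simp
qed



definition UU :: "int pmf \<Rightarrow> int \<Rightarrow> real" where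
  "UU \<mu> x = measure_pmf.expectation \<mu> (\<lambda>y. \<bar>real_of_int y - real_of_int x\<bar>)"
definition hh :: "int pmf \<Rightarrow> int \<Rightarrow> real" where
  "hh \<mu> x = UU \<mu> x - \<bar>real_of_int x\<bar>"
definition GG :: "int pmf \<Rightarrow> int \<Rightarrow> real" where
  "GG \<mu> x = hh \<mu> x + pmf \<mu> x"
definition rr :: "int pmf \<Rightarrow> int \<Rightarrow> real" where
  "rr \<mu> x = (if GG \<mu> x = 0 then 1 else pmf \<mu> x / GG \<mu> x)"

context
  fixes \<mu> :: "int pmf"
  assumes mz: "mean_zero_int \<mu>"
begin

lemma int_id: "integrable (measure_pmf \<mu>) real_of_int"
  using mz unfolding mean_zero_int_def by simp

lemma exp0: "measure_pmf.expectation \<mu> real_of_int = 0"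
  using mz unfolding mean_zero_int_def by simp

lemma int_abs: "integrable (measure_pmf \<mu>) (\<lambda>y. \<bar>real_of_int y - c\<bar>)"
  using int_id by (intro integrable_abs Bochner_Integration.integrable_diff) auto

lemma int_lin: "integrable (measure_pmf \<mu>) (\<lambda>y. real_of_int y - c)"
  using int_id by (intro Bochner_Integration.integrable_diff) auto

lemma hh_nonneg: "hh \<mu> x \<ge> 0"
proof -
  have "\<bar>measure_pmf.expectation \<mu> (\<lambda>y. real_of_int y - real_of_int x)\<bar> \<le> UU \<mu> x"
    unfolding UU_def by (rule integral_abs_bound)
  moreover have "measure_pmf.expectation \<mu> (\<lambda>y. real_of_int y - real_of_int x) = - real_of_int x"
    using int_id exp0 by (subst Bochner_Integration.integral_diff) auto
  ultimately show ?thesis unfolding hh_def by simp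
qed

lemma UU_second: "UU \<mu> (x-1) + UU \<mu> (x+1) = 2 * UU \<mu> x + 2 * pmf \<mu> x"
proof -
  have pw: "\<bar>real_of_int y - real_of_int (x-1)\<bar> + \<bar>real_of_int y - real_of_int (x+1)\<bar>
      = 2 * \<bar>real_of_int y - real_of_int x\<bar> + 2 * indicator {x} y" for y
    by (cases "y < x"; cases "y = x") (auto simp: indicator_def)
  have "UU \<mu> (x-1) + UU \<mu> (x+1) = measure_pmf.expectation \<mu>
      (\<lambda>y. \<bar>real_of_int y - real_of_int (x-1)\<bar> + \<bar>real_of_int y - real_of_int (x+1)\<bar>)"
    unfolding UU_def using int_abs by (subst Bochner_Integration.integral_add) auto
  also have "\<dots> = measure_pmf.expectation \<mu>
      (\<lambda>y. 2 * \<bar>real_of_int y - real_of_int x\<bar> + 2 * indicator {x} y)"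
    by (simp only: pw)
  also have "\<dots> = 2 * UU \<mu> x + 2 * pmf \<mu> x"
    unfolding UU_def using int_abs
    by (subst Bochner_Integration.integral_add) (auto simp: measure_pmf_single intro!: integrable_real_indicator simp: measure_pmf.emeasure_eq_measure)
  finally show ?thesis .
qed

lemma GG_eq: "GG \<mu> x = (if x = 0 then 1 else 0) + (hh \<mu> (x-1) + hh \<mu> (x+1)) / 2"
proof -
  have a: "\<bar>real_of_int (x-1)\<bar> + \<bar>real_of_int (x+1)\<bar> = 2 * \<bar>real_of_int x\<bar> + 2 * (if x = 0 then 1 else 0)"
    by auto
  show ?thesis using UU_second[of x] a unfolding GG_def hh_def by (simp add: field_simps)
qed

lemma rr01: "0 \<le> rr \<mu> x \<and> rr \<mu> x \<le> 1"
proof -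
  have a: "hh \<mu> x \<ge> 0" "pmf \<mu> x \<ge> 0" using hh_nonneg by auto
  show ?thesis
  proof (cases "GG \<mu> x = 0")
    case False
    then have "GG \<mu> x > 0" using a unfolding GG_def by linarith
    then show ?thesis using a unfolding rr_def GG_def by (auto simp: divide_le_eq_1)
  qed (simp add: rr_def)
qed

lemma hh_rr: "hh \<mu> x = (1 - rr \<mu> x) * GG \<mu> x"
proof -
  have a: "hh \<mu> x \<ge> 0" "pmf \<mu> x \<ge> 0" using hh_nonneg by auto
  show ?thesis
  proof (cases "GG \<mu> x = 0")
    case True
    then have "hh \<mu> x = 0" "pmf \<mu> x = 0" using a unfolding GG_def by linarith+
    then show ?thesis by (simp add: rr_def GG_def)
  next
    case False
    then show ?thesis unfolding rr_def GG_def by (simp add: field_simps)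
  qed
qed

lemma rr_GG: "rr \<mu> x * GG \<mu> x = pmf \<mu> x"
proof -
  have a: "hh \<mu> x \<ge> 0" "pmf \<mu> x \<ge> 0" using hh_nonneg by auto
  show ?thesis
  proof (cases "GG \<mu> x = 0")
    case True
    then have "hh \<mu> x = 0" "pmf \<mu> x = 0" using a unfolding GG_def by linarith+
    then show ?thesis by (simp add: rr_def GG_def)
  next
    case False
    then show ?thesis unfolding rr_def GG_def by (simp add: field_simps)
  qed
qed

lemma hh_lim1: "(\<lambda>n. hh \<mu> (int n)) \<longlonglongrightarrow> 0"
proof -
  have eq: "hh \<mu> (int n) = measure_pmf.expectation \<mu>
      (\<lambda>y. \<bar>real_of_int y - real n\<bar> - real n + real_of_int y)" for n
    unfolding hh_def UU_def using int_abs int_id exp0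
    by (subst Bochner_Integration.integral_add; (subst Bochner_Integration.integral_diff)?) auto
  have "(\<lambda>n. measure_pmf.expectation \<mu> (\<lambda>y. \<bar>real_of_int y - real n\<bar> - real n + real_of_int y))
      \<longlonglongrightarrow> measure_pmf.expectation \<mu> (\<lambda>y. 0)"
  proof (rule integral_dominated_convergence[where w="\<lambda>y. 2 * \<bar>real_of_int y\<bar>"])
    show "integrable (measure_pmf \<mu>) (\<lambda>y. 2 * \<bar>real_of_int y\<bar>)" using int_id by auto
    show "AE y in measure_pmf \<mu>. (\<lambda>n. \<bar>real_of_int y - real n\<bar> - real n + real_of_int y) \<longlonglongrightarrow> 0"
    proof (rule AE_I2)
      fix y :: int
      have "eventually (\<lambda>n. \<bar>real_of_int y - real n\<bar> - real n + real_of_int y = 0) sequentially"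
        using eventually_ge_at_top[of "nat \<bar>y\<bar>"] by eventually_elim auto
      then show "(\<lambda>n. \<bar>real_of_int y - real n\<bar> - real n + real_of_int y) \<longlonglongrightarrow> 0"
        by (rule tendsto_eventually)
    qed
    show "AE y in measure_pmf \<mu>. norm (\<bar>real_of_int y - real n\<bar> - real n + real_of_int y) \<le> 2 * \<bar>real_of_int y\<bar>" for n
      by (rule AE_I2) auto
  qed auto
  then show ?thesis by (simp add: eq)
qed

lemma hh_lim2: "(\<lambda>n. hh \<mu> (- int n)) \<longlonglongrightarrow> 0"
proof -
  have eq: "hh \<mu> (- int n) = measure_pmf.expectation \<mu>
      (\<lambda>y. \<bar>real_of_int y + real n\<bar> - real n - real_of_int y)" for n
    unfolding hh_def UU_def using int_abs int_id exp0
    by (subst Bochner_Integration.integral_diff; (subst Bochner_Integration.integral_diff)?) auto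
  have "(\<lambda>n. measure_pmf.expectation \<mu> (\<lambda>y. \<bar>real_of_int y + real n\<bar> - real n - real_of_int y))
      \<longlonglongrightarrow> measure_pmf.expectation \<mu> (\<lambda>y. 0)"
  proof (rule integral_dominated_convergence[where w="\<lambda>y. 2 * \<bar>real_of_int y\<bar>"])
    show "integrable (measure_pmf \<mu>) (\<lambda>y. 2 * \<bar>real_of_int y\<bar>)" using int_id by auto
    show "AE y in measure_pmf \<mu>. (\<lambda>n. \<bar>real_of_int y + real n\<bar> - real n - real_of_int y) \<longlonglongrightarrow> 0"
    proof (rule AE_I2)
      fix y :: int
      have "eventually (\<lambda>n. \<bar>real_of_int y + real n\<bar> - real n - real_of_int y = 0) sequentially"
        using eventually_ge_at_top[of "nat \<bar>y\<bar>"] by eventually_elim auto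
      then show "(\<lambda>n. \<bar>real_of_int y + real n\<bar> - real n - real_of_int y) \<longlonglongrightarrow> 0"
        by (rule tendsto_eventually)
    qed
    show "AE y in measure_pmf \<mu>. norm (\<bar>real_of_int y + real n\<bar> - real n - real_of_int y) \<le> 2 * \<bar>real_of_int y\<bar>" for n
      by (rule AE_I2) auto
  qed auto
  then show ?thesis by (simp add: eq)
qed

lemma hh_ex1: "e > 0 \<Longrightarrow> \<exists>n\<ge>x0. hh \<mu> n < e"
proof -
  assume e: "e > 0"
  from hh_lim1[THEN order_tendstoD(2), OF e] eventually_ge_at_top[of "nat \<bar>x0\<bar>"]
  have "eventually (\<lambda>n. hh \<mu> (int n) < e \<and> n \<ge> nat \<bar>x0\<bar>) sequentially"
    by (rule eventually_conj)
  then obtain n where "hh \<mu> (int n) < e" "n \<ge> nat \<bar>x0\<bar>" using eventually_sequentially by auto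
  then show ?thesis by (intro exI[of _ "int n"]) auto
qed

lemma hh_ex2: "e > 0 \<Longrightarrow> \<exists>n\<le>x0. hh \<mu> n < e"
proof -
  assume e: "e > 0"
  from hh_lim2[THEN order_tendstoD(2), OF e] eventually_ge_at_top[of "nat \<bar>x0\<bar>"]
  have "eventually (\<lambda>n. hh \<mu> (- int n) < e \<and> n \<ge> nat \<bar>x0\<bar>) sequentially"
    by (rule eventually_conj)
  then obtain n where "hh \<mu> (- int n) < e" "n \<ge> nat \<bar>x0\<bar>" using eventually_sequentially by auto
  then show ?thesis by (intro exI[of _ "- int n"]) auto
qed

lemma green_mu: "summable (\<lambda>t. av (rr \<mu>) t x) \<and> (\<Sum>t. av (rr \<mu>) t x) = GG \<mu> x"
  by (rule green[OF rr01 hh_rr GG_eq hh_nonneg hh_ex1 hh_ex2])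

lemma stop_sum: "(\<lambda>t. av (rr \<mu>) t x * rr \<mu> x) sums pmf \<mu> x"
proof -
  have "(\<lambda>t. av (rr \<mu>) t x) sums GG \<mu> x" using green_mu[of x] by (simp add: sums_iff)
  from sums_mult2[OF this, of "rr \<mu> x"] show ?thesis using rr_GG[of x] by (simp add: mult.commute)
qed

end


abbreviation "Mu \<equiv> measure_pmf (pmf_of_set {-1, 1::int})"
abbreviation "M1 \<equiv> PiM (UNIV::nat set) (\<lambda>_. Mu)"
abbreviation "M2 r \<equiv> PiM UNIV (\<lambda>(t::nat, x::int). measure_pmf (bernoulli_pmf (1 - r x)))"

lemma space_M1: "space M1 = UNIV"
  by (auto simp: space_PiM PiE_def extensional_def)

lemma space_M2: "space (M2 r) = UNIV"
  by (auto simp: space_PiM PiE_def extensional_def split_beta)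

lemma space_M: "space (srw_xi_space r) = UNIV"
  by (simp add: srw_xi_space_def space_pair_measure space_M1 space_M2)

lemma cs_pmf: "f \<in> measurable N (measure_pmf p) \<Longrightarrow> f \<in> measurable N (count_space UNIV)"
  using measurable_cong_sets[OF refl sets_measure_pmf_count_space] by blast

lemma cs_any: "(g :: 'b \<Rightarrow> 'c) \<in> measurable (count_space UNIV) M \<longleftrightarrow> g \<in> UNIV \<rightarrow> space M"
  by (rule measurable_count_space_eq1)

lemma m_post: "f \<in> measurable N (count_space UNIV) \<Longrightarrow> (\<lambda>x. g (f x)) \<in> borel_measurable N"
  by (rule measurable_compose[where N="count_space UNIV"]) auto

lemma m_post_cs: "f \<in> measurable N (count_space UNIV) \<Longrightarrow> (\<lambda>x. g (f x)) \<in> measurable N (count_space UNIV)"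
  by (rule measurable_compose[where N="count_space UNIV"]) auto

lemma m_pair:
  fixes f :: "'a \<Rightarrow> 'b::countable" and g :: "'a \<Rightarrow> 'c::countable"
  assumes "f \<in> measurable N (count_space UNIV)" "g \<in> measurable N (count_space UNIV)"
  shows "(\<lambda>x. (f x, g x)) \<in> measurable N (count_space UNIV)"
proof -
  have "(\<lambda>x. (i, g x)) \<in> measurable N (count_space UNIV)" for i
    using m_post_cs[OF assms(2), of "\<lambda>z. (i, z)"] .
  then show ?thesis using measurable_compose_countable[where f="\<lambda>i x. (i, g x)" and g=f] assms(1) by blast
qed

lemma m_add:
  fixes f g :: "'a \<Rightarrow> int"
  assumes "f \<in> measurable N (count_space UNIV)" "g \<in> measurable N (count_space UNIV)"
  shows "(\<lambda>x. f x + g x) \<in> measurable N (count_space UNIV)"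
  using m_post_cs[OF m_pair[OF assms], of "\<lambda>(a,b). a + b"] by simp

lemma m_list:
  fixes f :: "nat \<Rightarrow> 'a \<Rightarrow> 'b::countable"
  assumes "\<And>i. i < t \<Longrightarrow> f i \<in> measurable N (count_space UNIV)"
  shows "(\<lambda>x. map (\<lambda>i. f i x) [0..<t]) \<in> measurable N (count_space UNIV)"
  using assms
proof (induction t)
  case 0 then show ?case by simp
next
  case (Suc t)
  have "(\<lambda>x. (map (\<lambda>i. f i x) [0..<t], f t x)) \<in> measurable N (count_space UNIV)"
    using Suc by (intro m_pair) auto
  from m_post_cs[OF this, of "\<lambda>(l, a). l @ [a]"] show ?case by simp
qed

lemma sets_of:
  assumes "V \<in> measurable N (count_space UNIV)"
  shows "{\<omega>\<in>space N. P (V \<omega>)} \<in> sets N"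
proof -
  have "{\<omega>\<in>space N. P (V \<omega>)} = V -` {v. P v} \<inter> space N" by auto
  then show ?thesis using measurable_sets[OF assms, of "{v. P v}"] by simp
qed

lemma m_fst: "(\<lambda>\<omega>. fst \<omega> u) \<in> measurable (srw_xi_space r) (count_space UNIV)"
  unfolding srw_xi_space_def
  by (rule cs_pmf[of _ _ "pmf_of_set {-1,1}"]) measurable

lemma m_snd: "(\<lambda>\<omega>. snd \<omega> j) \<in> measurable (srw_xi_space r) (count_space UNIV)"
proof -
  have "(\<lambda>\<omega>. snd \<omega> j) \<in> measurable (srw_xi_space r) (measure_pmf (bernoulli_pmf (1 - r (snd j))))"
    unfolding srw_xi_space_def
    using measurable_compose[OF measurable_snd measurable_component_singleton[of j UNIV "\<lambda>(t::nat, x::int). measure_pmf (bernoulli_pmf (1 - r x))"]]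
    by (simp add: split_beta)
  then show ?thesis by (rule cs_pmf)
qed

lemma m_walk: "(\<lambda>\<omega>. walk \<omega> t) \<in> measurable (srw_xi_space r) (count_space UNIV)"
proof (induction t)
  case 0 then show ?case by (simp add: walk_def)
next
  case (Suc t)
  have "(\<lambda>\<omega>. walk \<omega> t + fst \<omega> t) \<in> measurable (srw_xi_space r) (count_space UNIV)"
    by (intro m_add Suc m_fst)
  then show ?case by (simp add: walk_def)
qed

lemma m_sndw: "(\<lambda>\<omega>. snd \<omega> (u, walk \<omega> u)) \<in> measurable (srw_xi_space r) (count_space UNIV)"
  using measurable_compose_countable[where f="\<lambda>y \<omega>. snd \<omega> (u, y)" and g="\<lambda>\<omega>. walk \<omega> u", OF m_snd m_walk] .

definition Ev :: "nat \<Rightarrow> int \<Rightarrow> bool \<Rightarrow> ((nat \<Rightarrow> int) \<times> (nat \<times> int \<Rightarrow> bool)) set" where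
  "Ev t x c = {\<omega>. (\<forall>u<t. snd \<omega> (u, walk \<omega> u)) \<and> walk \<omega> t = x \<and> snd \<omega> (t, x) = c}"

lemma Ev_sets: "Ev t x c \<in> sets (srw_xi_space r)"
proof -
  let ?V = "\<lambda>\<omega>. (map (\<lambda>u. snd \<omega> (u, walk \<omega> u)) [0..<t], walk \<omega> t, snd \<omega> (t, x))"
  have V: "?V \<in> measurable (srw_xi_space r) (count_space UNIV)"
    by (intro m_pair m_list m_sndw m_walk m_snd)
  have eq: "Ev t x c = {\<omega>\<in>space (srw_xi_space r). (\<lambda>(l, w, b). (\<forall>v\<in>set l. v) \<and> w = x \<and> b = c) (?V \<omega>)}"
    by (auto simp: Ev_def space_M)
  show ?thesis by (subst eq) (rule sets_of[OF V])
qed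

interpretation P1: product_prob_space "\<lambda>_::nat. Mu" UNIV
  by unfold_locales

lemma m_comp1: "i \<in> J \<Longrightarrow> (\<lambda>v. v i) \<in> measurable (PiM J (\<lambda>_. Mu)) (count_space UNIV)"
  by (rule cs_pmf) (rule measurable_component_singleton)

lemma restrict_int:
  assumes J: "finite J" and g: "g \<in> borel_measurable (PiM J (\<lambda>_. Mu))"
  shows "(\<integral>\<^sup>+\<omega>. g (restrict \<omega> J) \<partial>M1) = (\<integral>\<^sup>+v. g v \<partial>PiM J (\<lambda>_. Mu))"
proof -
  have "(\<integral>\<^sup>+v. g v \<partial>PiM J (\<lambda>_. Mu)) = (\<integral>\<^sup>+v. g v \<partial>distr M1 (PiM J (\<lambda>_. Mu)) (\<lambda>\<omega>. restrict \<omega> J))"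
    using P1.distr_PiM_restrict_finite[OF J] by simp
  also have "\<dots> = (\<integral>\<^sup>+\<omega>. g (restrict \<omega> J) \<partial>M1)"
    by (rule nn_integral_distr) (auto intro: measurable_restrict_subset simp: g)
  finally show ?thesis by simp
qed

lemma map_restrict: "{..<t} \<subseteq> J \<Longrightarrow> map (restrict x J) [0..<t] = map x [0..<t]"
  by (intro map_cong) auto

lemma step:
  fixes F :: "int list \<Rightarrow> int \<Rightarrow> ennreal"
  shows "(\<integral>\<^sup>+\<omega>. F (map \<omega> [0..<t]) (\<omega> t) \<partial>M1) =
    (\<integral>\<^sup>+\<omega>. ennreal (1/2) * F (map \<omega> [0..<t]) (-1) + ennreal (1/2) * F (map \<omega> [0..<t]) 1 \<partial>M1)"
proof -
  define g where "g v = F (map v [0..<t]) (v t)" for v :: "nat \<Rightarrow> int"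
  define g' where "g' v = ennreal (1/2) * F (map v [0..<t]) (-1) + ennreal (1/2) * F (map v [0..<t]) 1"
    for v :: "nat \<Rightarrow> int"
  have gm: "g \<in> borel_measurable (PiM {..t} (\<lambda>_. Mu))"
  proof -
    have "(\<lambda>v. (map (\<lambda>i. v i) [0..<t], v t)) \<in> measurable (PiM {..t} (\<lambda>_. Mu)) (count_space UNIV)"
      by (intro m_pair m_list m_comp1) auto
    from m_post[OF this, of "\<lambda>(l, d). F l d"] show ?thesis unfolding g_def by simp
  qed
  have gm': "g' \<in> borel_measurable (PiM {..<t} (\<lambda>_. Mu))"
  proof -
    have "(\<lambda>v. map (\<lambda>i. v i) [0..<t]) \<in> measurable (PiM {..<t} (\<lambda>_. Mu)) (count_space UNIV)"
      by (intro m_list m_comp1) auto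
    from m_post[OF this, of "\<lambda>l. ennreal (1/2) * F l (-1) + ennreal (1/2) * F l 1"]
    show ?thesis unfolding g'_def by simp
  qed
  have "(\<integral>\<^sup>+\<omega>. F (map \<omega> [0..<t]) (\<omega> t) \<partial>M1) = (\<integral>\<^sup>+\<omega>. g (restrict \<omega> {..t}) \<partial>M1)"
    by (intro nn_integral_cong) (auto simp: g_def intro!: arg_cong2[where f=F] map_cong)
  also have "\<dots> = (\<integral>\<^sup>+v. g v \<partial>PiM {..t} (\<lambda>_. Mu))"
    by (rule restrict_int[OF _ gm]) simp
  also have "\<dots> = (\<integral>\<^sup>+v. g v \<partial>PiM (insert t {..<t}) (\<lambda>_. Mu))"
    by (simp add: lessThan_Suc_atMost[symmetric] lessThan_Suc)
  also have "\<dots> = (\<integral>\<^sup>+x. (\<integral>\<^sup>+y. g (x(t := y)) \<partial>Mu) \<partial>PiM {..<t} (\<lambda>_. Mu))"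
    by (rule P1.product_nn_integral_insert)
       (use gm in \<open>auto simp: lessThan_Suc_atMost[symmetric] lessThan_Suc\<close>)
  also have "\<dots> = (\<integral>\<^sup>+x. g' x \<partial>PiM {..<t} (\<lambda>_. Mu))"
  proof (intro nn_integral_cong)
    fix x :: "nat \<Rightarrow> int"
    have "(\<integral>\<^sup>+y. g (x(t := y)) \<partial>Mu) = (\<integral>\<^sup>+y. F (map x [0..<t]) y \<partial>Mu)"
      by (intro nn_integral_cong) (auto simp: g_def intro!: arg_cong2[where f=F] map_cong)
    also have "\<dots> = (F (map x [0..<t]) (-1) + F (map x [0..<t]) 1) / 2"
      by (subst nn_integral_pmf_of_set) auto
    also have "\<dots> = g' x"
      unfolding g'_def
      by (simp add: divide_ennreal_def ennreal_half distrib_left mult.commute)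
    finally show "(\<integral>\<^sup>+y. g (x(t := y)) \<partial>Mu) = g' x" .
  qed
  also have "\<dots> = (\<integral>\<^sup>+\<omega>. g' (restrict \<omega> {..<t}) \<partial>M1)"
    by (rule restrict_int[OF _ gm', symmetric]) simp
  also have "\<dots> = (\<integral>\<^sup>+\<omega>. ennreal (1/2) * F (map \<omega> [0..<t]) (-1) + ennreal (1/2) * F (map \<omega> [0..<t]) 1 \<partial>M1)"
    by (intro nn_integral_cong) (simp add: g'_def map_restrict)
  finally show ?thesis .
qed



definition Pl :: "(int \<Rightarrow> real) \<Rightarrow> int list \<Rightarrow> real" where
  "Pl r l = (\<Prod>u<length l. 1 - r (sum_list (take u l)))"

definition Jl :: "(int \<Rightarrow> real) \<Rightarrow> int \<Rightarrow> int list \<Rightarrow> ennreal" where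
  "Jl r x l = ennreal ((if sum_list l = x then 1 else 0) * Pl r l)"

lemma Pl_nonneg: "(\<And>x. r x \<le> 1) \<Longrightarrow> Pl r l \<ge> 0"
  unfolding Pl_def by (intro prod_nonneg) auto

lemma Pl_snoc: "Pl r (l @ [d]) = Pl r l * (1 - r (sum_list l))"
proof -
  have "Pl r (l @ [d]) = (\<Prod>u<Suc (length l). 1 - r (sum_list (take u (l @ [d]))))"
    by (simp add: Pl_def)
  also have "\<dots> = (\<Prod>u<length l. 1 - r (sum_list (take u (l @ [d])))) * (1 - r (sum_list l))"
    by (simp add: prod.lessThan_Suc)
  also have "(\<Prod>u<length l. 1 - r (sum_list (take u (l @ [d])))) = Pl r l"
    unfolding Pl_def by (intro prod.cong) auto
  finally show ?thesis .
qed

lemma Jl_snoc: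
  assumes r01: "\<And>x. 0 \<le> r x \<and> r x \<le> 1"
  shows "Jl r y (l @ [d]) = ennreal (1 - r (y - d)) * Jl r (y - d) l"
proof -
  have e: "(if sum_list (l @ [d]) = y then 1 else 0) * Pl r (l @ [d])
      = (1 - r (y - d)) * ((if sum_list l = y - d then 1 else 0) * Pl r l)"
    by (auto simp: Pl_snoc algebra_simps)
  have "Pl r l \<ge> 0" using r01 Pl_nonneg by blast
  then have "ennreal ((1 - r (y - d)) * ((if sum_list l = y - d then 1 else 0) * Pl r l))
      = ennreal (1 - r (y - d)) * ennreal ((if sum_list l = y - d then 1 else 0) * Pl r l)"
    using r01[of "y-d"] by (intro ennreal_mult) auto
  then show ?thesis unfolding Jl_def e by simp
qed

lemma m_Jl: "(\<lambda>\<omega>. G (map \<omega> [0..<t])) \<in> borel_measurable M1"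
proof -
  have "(\<lambda>\<omega>. map (\<lambda>i. \<omega> i) [0..<t]) \<in> measurable M1 (count_space UNIV)"
    by (intro m_list m_comp1) auto
  from m_post[OF this, of G] show ?thesis by simp
qed

lemma I_av:
  assumes r01: "\<And>x. 0 \<le> r x \<and> r x \<le> 1"
  shows "(\<integral>\<^sup>+\<omega>. Jl r x (map \<omega> [0..<t]) \<partial>M1) = ennreal (av r t x)"
proof (induction t arbitrary: x)
  case 0
  then show ?case
    by (simp add: Jl_def Pl_def P1.emeasure_space_1 space_M1[symmetric])
next
  case (Suc t y)
  have "(\<integral>\<^sup>+\<omega>. Jl r y (map \<omega> [0..<Suc t]) \<partial>M1) = (\<integral>\<^sup>+\<omega>. (\<lambda>l d. Jl r y (l @ [d])) (map \<omega> [0..<t]) (\<omega> t) \<partial>M1)"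
    by simp
  also have "\<dots> = (\<integral>\<^sup>+\<omega>. ennreal (1/2) * Jl r y (map \<omega> [0..<t] @ [-1]) + ennreal (1/2) * Jl r y (map \<omega> [0..<t] @ [1]) \<partial>M1)"
    by (rule step)
  also have "\<dots> = (\<integral>\<^sup>+\<omega>. ennreal (1/2) * (ennreal (1 - r (y+1)) * Jl r (y+1) (map \<omega> [0..<t])) + ennreal (1/2) * (ennreal (1 - r (y-1)) * Jl r (y-1) (map \<omega> [0..<t])) \<partial>M1)"
  proof (intro nn_integral_cong)
    fix \<omega> :: "nat \<Rightarrow> int"
    have a: "Jl r y (l @ [-1]) = ennreal (1 - r (y+1)) * Jl r (y+1) l" for l
      using Jl_snoc[OF r01, where y=y and l=l and d="-1"] by simp
    have b: "Jl r y (l @ [1]) = ennreal (1 - r (y-1)) * Jl r (y-1) l" for l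
      using Jl_snoc[OF r01, where y=y and l=l and d="1"] by simp
    show "ennreal (1/2) * Jl r y (map \<omega> [0..<t] @ [-1]) + ennreal (1/2) * Jl r y (map \<omega> [0..<t] @ [1]) =
      ennreal (1/2) * (ennreal (1 - r (y+1)) * Jl r (y+1) (map \<omega> [0..<t])) + ennreal (1/2) * (ennreal (1 - r (y-1)) * Jl r (y-1) (map \<omega> [0..<t]))"
      by (simp only: a b)
  qed
  also have "\<dots> = ennreal (1/2) * (ennreal (1 - r (y+1)) * (\<integral>\<^sup>+\<omega>. Jl r (y+1) (map \<omega> [0..<t]) \<partial>M1)) + ennreal (1/2) * (ennreal (1 - r (y-1)) * (\<integral>\<^sup>+\<omega>. Jl r (y-1) (map \<omega> [0..<t]) \<partial>M1))"
    using m_Jl[of "\<lambda>l. ennreal (1/2) * (ennreal (1 - r (y+1)) * Jl r (y+1) l)" t]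
      m_Jl[of "\<lambda>l. ennreal (1/2) * (ennreal (1 - r (y-1)) * Jl r (y-1) l)" t]
      m_Jl[of "\<lambda>l. ennreal (1 - r (y-1)) * Jl r (y-1) l" t]
      m_Jl[of "\<lambda>l. ennreal (1 - r (y+1)) * Jl r (y+1) l" t]
      m_Jl[of "Jl r (y+1)" t] m_Jl[of "Jl r (y-1)" t]
    by (simp del: ennreal_half add: nn_integral_add nn_integral_cmult)
  also have "\<dots> = ennreal (1/2) * (ennreal (1 - r (y+1)) * ennreal (av r t (y+1))) + ennreal (1/2) * (ennreal (1 - r (y-1)) * ennreal (av r t (y-1)))"
    by (simp only: Suc.IH)
  also have "\<dots> = ennreal (1/2 * ((1 - r (y+1)) * av r t (y+1)) + 1/2 * ((1 - r (y-1)) * av r t (y-1)))"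
  proof -
    have n: "0 \<le> 1 - r (y+1)" "0 \<le> 1 - r (y-1)" "0 \<le> av r t (y+1)" "0 \<le> av r t (y-1)"
      using r01[of "y+1"] r01[of "y-1"] av_nonneg[of r t "y+1"] av_nonneg[of r t "y-1"] r01 by auto
    have p1: "ennreal (1 - r (y+1)) * ennreal (av r t (y+1)) = ennreal ((1 - r (y+1)) * av r t (y+1))"
      using n by (simp add: ennreal_mult)
    have p2: "ennreal (1 - r (y-1)) * ennreal (av r t (y-1)) = ennreal ((1 - r (y-1)) * av r t (y-1))"
      using n by (simp add: ennreal_mult)
    have q: "ennreal (1/2) * ennreal a = ennreal (1/2 * a)" if "a \<ge> 0" for a :: real
      using that ennreal_mult[of "1/2" a] by (simp del: ennreal_half)
    show ?thesis unfolding p1 p2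
      using n by (simp del: ennreal_half add: q ennreal_plus)
  qed
  also have "\<dots> = ennreal (av r (Suc t) y)"
    by (rule arg_cong[where f=ennreal]) (simp add: field_simps)
  finally show ?case .
qed

lemma sum_map_upt: "sum_list (map f [0..<u]) = (\<Sum>i<u. f i)"
  by (simp add: interv_sum_list_conv_sum_set_nat atLeast0LessThan)

lemma ind_eq:
  "(if (\<Sum>i<t. \<omega>1 i) = x then 1 else 0) * (\<Prod>u<t. 1 - r (\<Sum>i<u. \<omega>1 i))
   = (if sum_list (map \<omega>1 [0..<t]) = x then 1 else (0::real)) * Pl r (map \<omega>1 [0..<t])"
proof -
  have "Pl r (map \<omega>1 [0..<t]) = (\<Prod>u<t. 1 - r (\<Sum>i<u. \<omega>1 i))"
    unfolding Pl_def by (intro prod.cong) (auto simp: take_map sum_map_upt)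
  then show ?thesis by (simp add: sum_map_upt)
qed

lemma emeasure_Ev:
  assumes r01: "\<And>x. 0 \<le> r x \<and> r x \<le> 1"
  shows "emeasure (srw_xi_space r) (Ev t x c) = ennreal (av r t x * (if c then 1 - r x else r x))"
proof -
  interpret M2p: prob_space "M2 r"
    by (rule prob_space_PiM) (simp add: split_beta prob_space_measure_pmf)
  interpret P2: product_prob_space "\<lambda>(t::nat, x::int). measure_pmf (bernoulli_pmf (1 - r x))" UNIV
    by (auto intro!: product_prob_space.intro product_sigma_finite.intro prob_space_imp_sigma_finite
        product_prob_space_axioms.intro simp: split_beta prob_space_measure_pmf)
  define wc where "wc = (if c then 1 - r x else r x)"
  have wc0: "wc \<ge> 0" using r01[of x] by (simp add: wc_def)
  have sec: "emeasure (M2 r) (Pair \<omega>1 -` Ev t x c) =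
     ennreal ((if (\<Sum>i<t. \<omega>1 i) = x then 1 else 0) * (\<Prod>u<t. 1 - r (\<Sum>i<u. \<omega>1 i)) * wc)" for \<omega>1
  proof (cases "(\<Sum>i<t. \<omega>1 i) = x")
    case False
    then have "Pair \<omega>1 -` Ev t x c = {}" by (auto simp: Ev_def walk_def)
    then show ?thesis using False by simp
  next
    case True
    let ?w = "\<lambda>u. \<Sum>i<u. \<omega>1 i"
    let ?J = "(\<lambda>u. (u, ?w u)) ` {..t}"
    let ?X = "\<lambda>j::nat\<times>int. if fst j < t then {True} else {c}"
    have "Pair \<omega>1 -` Ev t x c = {\<xi>\<in>space (M2 r). \<forall>j\<in>?J. \<xi> j \<in> ?X j}"
      using True by (auto simp: Ev_def walk_def space_M2)
    then have "emeasure (M2 r) (Pair \<omega>1 -` Ev t x c) = (\<Prod>j\<in>?J. emeasure (measure_pmf (bernoulli_pmf (1 - r (snd j)))) (?X j))"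
      using P2.emeasure_PiM_Collect[of ?J ?X] by (simp add: split_beta)
    also have "\<dots> = (\<Prod>u\<in>{..t}. emeasure (measure_pmf (bernoulli_pmf (1 - r (?w u)))) (?X (u, ?w u)))"
      by (subst prod.reindex) (auto simp: inj_on_def)
    also have "\<dots> = (\<Prod>u\<in>{..t}. ennreal (if u < t then 1 - r (?w u) else wc))"
      using True r01 by (intro prod.cong) (auto simp: emeasure_pmf_single wc_def)
    also have "\<dots> = ennreal (\<Prod>u\<in>{..t}. if u < t then 1 - r (?w u) else wc)"
      using r01 wc0 by (intro prod_ennreal) auto
    also have "(\<Prod>u\<in>{..t}. if u < t then 1 - r (?w u) else wc) = (\<Prod>u<t. 1 - r (?w u)) * wc"
      by (simp add: lessThan_Suc_atMost[symmetric] prod.lessThan_Suc)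
    finally show ?thesis using True by simp
  qed
  have "emeasure (srw_xi_space r) (Ev t x c) = (\<integral>\<^sup>+\<omega>1. emeasure (M2 r) (Pair \<omega>1 -` Ev t x c) \<partial>M1)"
    unfolding srw_xi_space_def
    by (rule M2p.emeasure_pair_measure_alt) (rule Ev_sets[of t x c r, unfolded srw_xi_space_def])
  also have "\<dots> = (\<integral>\<^sup>+\<omega>1. Jl r x (map \<omega>1 [0..<t]) * ennreal wc \<partial>M1)"
    using wc0 r01 Pl_nonneg
    by (intro nn_integral_cong) (simp add: sec ind_eq Jl_def ennreal_mult)
  also have "\<dots> = (\<integral>\<^sup>+\<omega>1. Jl r x (map \<omega>1 [0..<t]) \<partial>M1) * ennreal wc"
    by (rule nn_integral_multc) (rule m_Jl)
  also have "\<dots> = ennreal (av r t x * wc)"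
    using I_av[OF r01] wc0 av_nonneg r01 by (simp add: ennreal_mult)
  finally show ?thesis by (simp add: wc_def)
qed



definition bb :: "(int \<Rightarrow> real) \<Rightarrow> nat \<Rightarrow> int \<Rightarrow> real" where
  "bb r s x = (1 - r x) * av r s x"

definition nu :: "(int \<Rightarrow> real) \<Rightarrow> nat \<Rightarrow> int \<Rightarrow> real" where
  "nu r t x = (\<Sum>u\<le>t. av r u x * r x) + bb r t x"

definition lap :: "(int \<Rightarrow> real) \<Rightarrow> int \<Rightarrow> real" where
  "lap \<phi> x = (\<phi> (x-1) + \<phi> (x+1)) / 2 - \<phi> x"

lemma bb_supp: "\<bar>x\<bar> > int t \<Longrightarrow> bb r t x = 0"
  by (simp add: bb_def av_supp)

lemma nu_supp: "\<bar>x\<bar> > int t \<Longrightarrow> nu r t x = 0"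
  unfolding nu_def by (auto simp: bb_supp av_supp intro!: sum.neutral)

lemma shift_gen:
  fixes f :: "int \<Rightarrow> real"
  assumes supp: "\<And>x. \<bar>x\<bar> > int m \<Longrightarrow> f x = 0" and mN: "m < N" and k: "\<bar>k\<bar> = 1"
  shows "(\<Sum>x\<in>{-int N..int N}. f (x + k)) = (\<Sum>x\<in>{-int N..int N}. f x)"
proof -
  have "(\<Sum>x\<in>{-int N..int N}. f (x + k)) = (\<Sum>y\<in>{-int N + k..int N + k}. f y)"
    by (rule sum.reindex_bij_witness[of _ "\<lambda>y. y - k" "\<lambda>x. x + k"]) auto
  also have "\<dots> = (\<Sum>y\<in>{-int N - 1..int N + 1}. f y)"
    using k mN by (intro sum.mono_neutral_left) (auto intro!: supp)
  also have "\<dots> = (\<Sum>y\<in>{-int N..int N}. f y)"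
    using mN by (intro sum.mono_neutral_right) (auto intro!: supp)
  finally show ?thesis .
qed

lemma Phi:
  fixes \<phi> :: "int \<Rightarrow> real"
  assumes "t < N"
  shows "(\<Sum>x\<in>{-int N..int N}. \<phi> x * nu r t x) = \<phi> 0 + (\<Sum>s<t. \<Sum>x\<in>{-int N..int N}. bb r s x * lap \<phi> x)"
  using assms
proof (induction t arbitrary: N)
  case 0
  have "(\<Sum>x\<in>{-int N..int N}. \<phi> x * nu r 0 x) = (\<Sum>x\<in>{-int N..int N}. if x = 0 then \<phi> 0 else 0)"
    by (intro sum.cong) (auto simp: nu_def bb_def algebra_simps)
  then show ?case by simp
next
  case (Suc t N)
  let ?W = "{-int N..int N}"
  have IH: "(\<Sum>x\<in>?W. \<phi> x * nu r t x) = \<phi> 0 + (\<Sum>s<t. \<Sum>x\<in>?W. bb r s x * lap \<phi> x)"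
    using Suc by auto
  have nus: "nu r (Suc t) x = nu r t x - bb r t x + (bb r t (x-1) + bb r t (x+1)) / 2" for x
    by (simp add: nu_def bb_def field_simps)
  have s1: "(\<Sum>x\<in>?W. \<phi> x * bb r t (x-1)) = (\<Sum>x\<in>?W. \<phi> (x+1) * bb r t x)"
    using shift_gen[of "Suc t" "\<lambda>y. \<phi> y * bb r t (y - 1)" N 1] Suc.prems
    by (auto simp: bb_supp)
  have s2: "(\<Sum>x\<in>?W. \<phi> x * bb r t (x+1)) = (\<Sum>x\<in>?W. \<phi> (x-1) * bb r t x)"
    using shift_gen[of "Suc t" "\<lambda>y. \<phi> y * bb r t (y + 1)" N "-1"] Suc.prems
    by (auto simp: bb_supp)
  have "(\<Sum>x\<in>?W. \<phi> x * nu r (Suc t) x) = (\<Sum>x\<in>?W. \<phi> x * nu r t x) - (\<Sum>x\<in>?W. \<phi> x * bb r t x)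
      + ((\<Sum>x\<in>?W. \<phi> x * bb r t (x-1)) + (\<Sum>x\<in>?W. \<phi> x * bb r t (x+1))) / 2"
    by (simp add: nus algebra_simps sum.distrib sum_subtractf sum_divide_distrib[symmetric] sum_distrib_left)
  also have "\<dots> = (\<Sum>x\<in>?W. \<phi> x * nu r t x) + (\<Sum>x\<in>?W. bb r t x * lap \<phi> x)"
    unfolding s1 s2 lap_def
    by (simp add: algebra_simps sum.distrib sum_subtractf sum_divide_distrib[symmetric] sum_distrib_left)
  finally show ?case using IH by simp
qed

lemma lap_abs:
  fixes c :: int
  shows "lap (\<lambda>x. \<bar>real_of_int x - real_of_int c\<bar>) x = (if x = c then 1 else 0)"
proof -
  consider "x + 1 \<le> c" | "x = c" | "c + 1 \<le> x" by linarith
  then show ?thesis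
  proof cases
    case 1
    then have "real_of_int x + 1 \<le> real_of_int c" by linarith
    then show ?thesis using 1 unfolding lap_def by (simp add: abs_if)
  next
    case 3
    then have "real_of_int c + 1 \<le> real_of_int x" by linarith
    then show ?thesis using 3 unfolding lap_def by (simp add: abs_if)
  qed (simp add: lap_def)
qed

lemma lap_lin: "lap (\<lambda>x. real_of_int x) x = 0"
  unfolding lap_def by simp

lemma lap_one: "lap (\<lambda>x. 1) x = 0"
  unfolding lap_def by simp

lemma bb_nonneg: "(\<And>x. 0 \<le> r x \<and> r x \<le> 1) \<Longrightarrow> bb r s x \<ge> 0"
  unfolding bb_def using av_nonneg by (metis diff_ge_0_iff_ge mult_nonneg_nonneg)

lemma nu_nonneg: "(\<And>x. 0 \<le> r x \<and> r x \<le> 1) \<Longrightarrow> nu r t x \<ge> 0"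
  unfolding nu_def using av_nonneg bb_nonneg by (metis add_nonneg_nonneg mult_nonneg_nonneg sum_nonneg)

context
  fixes \<mu> :: "int pmf"
  assumes mz: "mean_zero_int \<mu>"
begin

lemma Phi_abs:
  assumes "t < N"
  shows "(\<Sum>x\<in>{-int N..int N}. \<bar>real_of_int x - real_of_int y\<bar> * nu (rr \<mu>) t x) \<le> \<bar>real_of_int y\<bar> + hh \<mu> y"
proof -
  have r01: "\<And>x. 0 \<le> rr \<mu> x \<and> rr \<mu> x \<le> 1" using rr01[OF mz] by blast
  have inner: "(\<Sum>x\<in>{-int N..int N}. bb (rr \<mu>) s x * lap (\<lambda>x. \<bar>real_of_int x - real_of_int y\<bar>) x) \<le> bb (rr \<mu>) s y" for s
  proof -
    have "(\<Sum>x\<in>{-int N..int N}. bb (rr \<mu>) s x * lap (\<lambda>x. \<bar>real_of_int x - real_of_int y\<bar>) x)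
        = (\<Sum>x\<in>{-int N..int N}. if x = y then bb (rr \<mu>) s y else 0)"
      by (intro sum.cong) (auto simp: lap_abs)
    also have "\<dots> \<le> bb (rr \<mu>) s y"
      using bb_nonneg[OF r01] by (simp add: sum.delta)
    finally show ?thesis .
  qed
  have "(\<Sum>s<t. bb (rr \<mu>) s y) = (1 - rr \<mu> y) * (\<Sum>s<t. av (rr \<mu>) s y)"
    by (simp add: bb_def sum_distrib_left)
  also have "\<dots> \<le> (1 - rr \<mu> y) * GG \<mu> y"
  proof (rule mult_left_mono)
    show "(\<Sum>s<t. av (rr \<mu>) s y) \<le> GG \<mu> y"
      using green_mu[OF mz, of y] av_nonneg[of "rr \<mu>"] r01
      by (metis sum_le_suminf finite_lessThan)
  qed (use r01 in auto)
  also have "\<dots> = hh \<mu> y" using hh_rr[OF mz] by simp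
  finally have b: "(\<Sum>s<t. bb (rr \<mu>) s y) \<le> hh \<mu> y" .
  have "(\<Sum>x\<in>{-int N..int N}. \<bar>real_of_int x - real_of_int y\<bar> * nu (rr \<mu>) t x)
      = \<bar>real_of_int y\<bar> + (\<Sum>s<t. \<Sum>x\<in>{-int N..int N}. bb (rr \<mu>) s x * lap (\<lambda>x. \<bar>real_of_int x - real_of_int y\<bar>) x)"
    using Phi[OF assms, of "\<lambda>x. \<bar>real_of_int x - real_of_int y\<bar>" "rr \<mu>"] by simp
  also have "\<dots> \<le> \<bar>real_of_int y\<bar> + (\<Sum>s<t. bb (rr \<mu>) s y)"
    using inner by (intro add_left_mono sum_mono) auto
  finally show ?thesis using b by simp
qed

lemma Phi_lin: "t < N \<Longrightarrow> (\<Sum>x\<in>{-int N..int N}. real_of_int x * nu r t x) = 0"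
  using Phi[of t N "\<lambda>x. real_of_int x" r] by (simp add: lap_lin)

lemma Phi_one: "t < N \<Longrightarrow> (\<Sum>x\<in>{-int N..int N}. nu r t x) = 1"
  using Phi[of t N "\<lambda>x. 1" r] by (simp add: lap_one)

lemma tail_bound:
  "(\<Sum>x\<in>{-int (Suc t)..int (Suc t)}. \<bar>real_of_int x\<bar> * (if 2 * real n < \<bar>real_of_int x\<bar> then 1 else 0) * nu (rr \<mu>) t x)
    \<le> hh \<mu> (int n) + hh \<mu> (- int n)"
proof -
  let ?W = "{-int (Suc t)..int (Suc t)}"
  have r01: "\<And>x. 0 \<le> rr \<mu> x \<and> rr \<mu> x \<le> 1" using rr01[OF mz] by blast
  have pw: "\<bar>real_of_int x\<bar> * (if 2 * real n < \<bar>real_of_int x\<bar> then 1 else 0)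
      \<le> \<bar>real_of_int x - real_of_int (int n)\<bar> + \<bar>real_of_int x - real_of_int (- int n)\<bar> - 2 * real n" for x
    by (cases "2 * real n < \<bar>real_of_int x\<bar>") auto
  have "(\<Sum>x\<in>?W. \<bar>real_of_int x\<bar> * (if 2 * real n < \<bar>real_of_int x\<bar> then 1 else 0) * nu (rr \<mu>) t x)
      \<le> (\<Sum>x\<in>?W. (\<bar>real_of_int x - real_of_int (int n)\<bar> + \<bar>real_of_int x - real_of_int (- int n)\<bar> - 2 * real n) * nu (rr \<mu>) t x)"
    using pw nu_nonneg[OF r01] by (intro sum_mono mult_right_mono) auto
  also have "\<dots> = (\<Sum>x\<in>?W. \<bar>real_of_int x - real_of_int (int n)\<bar> * nu (rr \<mu>) t x)
      + (\<Sum>x\<in>?W. \<bar>real_of_int x - real_of_int (- int n)\<bar> * nu (rr \<mu>) t x) - 2 * real n * (\<Sum>x\<in>?W. nu (rr \<mu>) t x)"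
    by (simp add: algebra_simps sum.distrib sum_subtractf sum_distrib_left)
  also have "\<dots> \<le> (real n + hh \<mu> (int n)) + (real n + hh \<mu> (- int n)) - 2 * real n"
    using Phi_abs[of t "Suc t" "int n"] Phi_abs[of t "Suc t" "- int n"] Phi_one[of t "Suc t" "rr \<mu>"]
    by simp
  finally show ?thesis by simp
qed

end


lemma tau_inf_iff: "tau_r \<omega> = \<infinity> \<longleftrightarrow> (\<forall>u. snd \<omega> (u, walk \<omega> u))"
  by (auto simp: tau_r_def)

lemma tau_enat_iff: "tau_r \<omega> = enat t \<longleftrightarrow> (\<forall>u<t. snd \<omega> (u, walk \<omega> u)) \<and> \<not> snd \<omega> (t, walk \<omega> t)"
proof
  assume h: "tau_r \<omega> = enat t"
  then have ex: "\<exists>t. \<not> snd \<omega> (t, walk \<omega> t)" by (auto simp: tau_r_def split: if_splits)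
  with h have l: "(LEAST t. \<not> snd \<omega> (t, walk \<omega> t)) = t" by (simp add: tau_r_def)
  have a: "\<not> snd \<omega> (t, walk \<omega> t)" using LeastI_ex[OF ex] l by simp
  have b: "\<forall>u<t. snd \<omega> (u, walk \<omega> u)" using not_less_Least[where P="\<lambda>t. \<not> snd \<omega> (t, walk \<omega> t)"] l by blast
  show "(\<forall>u<t. snd \<omega> (u, walk \<omega> u)) \<and> \<not> snd \<omega> (t, walk \<omega> t)" using a b by blast
next
  assume h: "(\<forall>u<t. snd \<omega> (u, walk \<omega> u)) \<and> \<not> snd \<omega> (t, walk \<omega> t)"
  then have "(LEAST t. \<not> snd \<omega> (t, walk \<omega> t)) = t"
    by (intro Least_equality) (auto simp: not_le[symmetric])
  then show "tau_r \<omega> = enat t" using h by (auto simp: tau_r_def)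
qed

lemma tau_gt_iff: "enat t < tau_r \<omega> \<longleftrightarrow> (\<forall>u\<le>t. snd \<omega> (u, walk \<omega> u))"
proof (cases "tau_r \<omega>")
  case (enat T)
  then have h: "(\<forall>u<T. snd \<omega> (u, walk \<omega> u)) \<and> \<not> snd \<omega> (T, walk \<omega> T)" using tau_enat_iff by blast
  show ?thesis
  proof
    assume "enat t < tau_r \<omega>"
    then have "t < T" using enat by simp
    then show "\<forall>u\<le>t. snd \<omega> (u, walk \<omega> u)" using h by auto
  next
    assume a: "\<forall>u\<le>t. snd \<omega> (u, walk \<omega> u)"
    have "t < T" using a h by (metis not_less)
    then show "enat t < tau_r \<omega>" using enat by simp
  qed
next
  case infinity then show ?thesis using tau_inf_iff[of \<omega>] by simp
qed

lemma Ev_tau: "\<omega> \<in> Ev t x False \<longleftrightarrow> tau_r \<omega> = enat t \<and> walk \<omega> t = x"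
  by (auto simp: Ev_def tau_enat_iff)

lemma Ev_True: "\<omega> \<in> Ev t x True \<longleftrightarrow> enat t < tau_r \<omega> \<and> walk \<omega> t = x"
  unfolding Ev_def tau_gt_iff by (auto simp: le_less)

lemma A_eq: "{\<omega> \<in> space (srw_xi_space r). tau_r \<omega> \<noteq> \<infinity> \<and> walk \<omega> (the_enat (tau_r \<omega>)) = x} = (\<Union>t. Ev t x False)"
  by (auto simp: space_M Ev_tau)

lemma disj_Ev: "disjoint_family (\<lambda>t. Ev t x False)"
  by (auto simp: disjoint_family_on_def Ev_tau)

lemma stop_eq: "{\<omega> \<in> space (srw_xi_space r). stopped_walk \<omega> t = z} = (\<Union>u\<in>{..t}. Ev u z False) \<union> Ev t z True"
proof (intro set_eqI iffI)
  fix \<omega> assume "\<omega> \<in> {\<omega> \<in> space (srw_xi_space r). stopped_walk \<omega> t = z}"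
  then have s: "stopped_walk \<omega> t = z" by simp
  show "\<omega> \<in> (\<Union>u\<in>{..t}. Ev u z False) \<union> Ev t z True"
  proof (cases "tau_r \<omega> \<le> enat t")
    case True
    then obtain u where u: "tau_r \<omega> = enat u" "u \<le> t" by (cases "tau_r \<omega>") auto
    then have "walk \<omega> u = z" using s by (simp add: stopped_walk_def)
    then show ?thesis using u by (auto simp: Ev_tau)
  next
    case False
    then have "min (enat t) (tau_r \<omega>) = enat t" by (simp add: min_def not_le less_imp_le)
    then have "walk \<omega> t = z" using s by (simp add: stopped_walk_def)
    then show ?thesis using False by (auto simp: Ev_True not_le)
  qed
next
  fix \<omega> assume "\<omega> \<in> (\<Union>u\<in>{..t}. Ev u z False) \<union> Ev t z True"
  then have "stopped_walk \<omega> t = z"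
  proof
    assume "\<omega> \<in> (\<Union>u\<in>{..t}. Ev u z False)"
    then obtain u where "u \<le> t" "tau_r \<omega> = enat u" "walk \<omega> u = z" by (auto simp: Ev_tau)
    then show ?thesis by (simp add: stopped_walk_def min_def)
  next
    assume "\<omega> \<in> Ev t z True"
    then have "enat t < tau_r \<omega>" "walk \<omega> t = z" by (auto simp: Ev_True)
    then show ?thesis by (simp add: stopped_walk_def min_def less_imp_le)
  qed
  then show "\<omega> \<in> {\<omega> \<in> space (srw_xi_space r). stopped_walk \<omega> t = z}" by (simp add: space_M)
qed

lemma m_stop: "(\<lambda>\<omega>. stopped_walk \<omega> t) \<in> measurable (srw_xi_space r) (count_space UNIV)"
proof (subst measurable_count_space_eq2_countable, intro conjI ballI)
  fix z :: int
  have "(\<lambda>\<omega>. stopped_walk \<omega> t) -` {z} \<inter> space (srw_xi_space r) = {\<omega> \<in> space (srw_xi_space r). stopped_walk \<omega> t = z}"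
    by auto
  also have "\<dots> = (\<Union>u\<in>{..t}. Ev u z False) \<union> Ev t z True" by (rule stop_eq)
  finally show "(\<lambda>\<omega>. stopped_walk \<omega> t) -` {z} \<inter> space (srw_xi_space r) \<in> sets (srw_xi_space r)"
    using Ev_sets by auto
qed auto

lemma nn_int_countable:
  fixes X :: "'a \<Rightarrow> 'b::countable"
  assumes X: "X \<in> measurable M (count_space UNIV)"
  shows "(\<integral>\<^sup>+\<omega>. F (X \<omega>) \<partial>M) = (\<integral>\<^sup>+z. F z * emeasure M {\<omega>\<in>space M. X \<omega> = z} \<partial>count_space UNIV)"
proof -
  have S: "{\<omega>\<in>space M. X \<omega> = z} \<in> sets M" for z using sets_of[OF X] .
  have "(\<integral>\<^sup>+\<omega>. F (X \<omega>) \<partial>M) = (\<integral>\<^sup>+\<omega>. (\<integral>\<^sup>+z. F z * indicator {\<omega>\<in>space M. X \<omega> = z} \<omega> \<partial>count_space UNIV) \<partial>M)"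
  proof (intro nn_integral_cong)
    fix \<omega> assume \<omega>: "\<omega> \<in> space M"
    have "(\<integral>\<^sup>+z. F z * indicator {\<omega>\<in>space M. X \<omega> = z} \<omega> \<partial>count_space UNIV)
        = (\<integral>\<^sup>+z. F z * indicator {X \<omega>} z \<partial>count_space UNIV)"
      using \<omega> by (intro nn_integral_cong) (auto simp: indicator_def)
    also have "\<dots> = F (X \<omega>)"
      by (simp add: nn_integral_indicator_singleton)
    finally show "F (X \<omega>) = (\<integral>\<^sup>+z. F z * indicator {\<omega>\<in>space M. X \<omega> = z} \<omega> \<partial>count_space UNIV)" by simp
  qed
  also have "\<dots> = (\<integral>\<^sup>+z. (\<integral>\<^sup>+\<omega>. F z * indicator {\<omega>\<in>space M. X \<omega> = z} \<omega> \<partial>M) \<partial>count_space UNIV)"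
    by (rule nn_integral_count_space_nn_integral) (use S in \<open>simp_all, measurable\<close>)
  also have "\<dots> = (\<integral>\<^sup>+z. F z * emeasure M {\<omega>\<in>space M. X \<omega> = z} \<partial>count_space UNIV)"
    by (intro nn_integral_cong) (simp add: nn_integral_cmult_indicator S)
  finally show ?thesis .
qed

lemma nn_count_finite:
  assumes "finite W" "\<And>z. z \<notin> W \<Longrightarrow> f z = 0"
  shows "(\<integral>\<^sup>+z. f z \<partial>count_space UNIV) = (\<Sum>z\<in>W. f z)"
proof -
  have "(\<integral>\<^sup>+z. f z \<partial>count_space UNIV) = (\<integral>\<^sup>+z. f z * indicator W z \<partial>count_space UNIV)"
    using assms by (intro nn_integral_cong) (auto simp: indicator_def)
  also have "\<dots> = (\<integral>\<^sup>+z. f z \<partial>count_space W)"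
    by (simp add: nn_integral_count_space_indicator)
  also have "\<dots> = (\<Sum>z\<in>W. f z)"
    using assms by (simp add: nn_integral_count_space_finite)
  finally show ?thesis .
qed

context
  fixes \<mu> :: "int pmf"
  assumes mz: "mean_zero_int \<mu>"
begin

lemma r01': "0 \<le> rr \<mu> x \<and> rr \<mu> x \<le> 1" using rr01[OF mz] by blast

lemma psM: "prob_space (srw_xi_space (rr \<mu>))"
  unfolding srw_xi_space_def
  by (intro prob_space_pair prob_space_PiM) (auto simp: split_beta prob_space_measure_pmf)

lemma emA: "emeasure (srw_xi_space (rr \<mu>)) (\<Union>t. Ev t x False) = ennreal (pmf \<mu> x)"
proof -
  have "emeasure (srw_xi_space (rr \<mu>)) (\<Union>t. Ev t x False) = (\<Sum>t. emeasure (srw_xi_space (rr \<mu>)) (Ev t x False))"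
    by (rule suminf_emeasure[symmetric]) (auto simp: Ev_sets disj_Ev)
  also have "\<dots> = (\<Sum>t. ennreal (av (rr \<mu>) t x * rr \<mu> x))"
    by (simp add: emeasure_Ev r01')
  also have "\<dots> = ennreal (\<Sum>t. av (rr \<mu>) t x * rr \<mu> x)"
    using stop_sum[OF mz, of x] av_nonneg[of "rr \<mu>"] r01'
    by (intro suminf_ennreal2) (auto simp: sums_iff)
  also have "\<dots> = ennreal (pmf \<mu> x)"
    using stop_sum[OF mz, of x] by (simp add: sums_iff)
  finally show ?thesis .
qed

lemma part_measure:
  "measure (srw_xi_space (rr \<mu>)) {\<omega> \<in> space (srw_xi_space (rr \<mu>)). tau_r \<omega> \<noteq> \<infinity> \<and> walk \<omega> (the_enat (tau_r \<omega>)) = x}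
    = pmf \<mu> x"
  unfolding A_eq measure_def emA by simp

lemma part_AE: "AE \<omega> in srw_xi_space (rr \<mu>). tau_r \<omega> \<noteq> \<infinity>"
proof -
  interpret ps: prob_space "srw_xi_space (rr \<mu>)" by (rule psM)
  let ?M = "srw_xi_space (rr \<mu>)"
  let ?A = "\<lambda>x. \<Union>t. Ev t x False"
  have As: "?A x \<in> sets ?M" for x using Ev_sets by auto
  have B: "{\<omega>\<in>space ?M. tau_r \<omega> \<noteq> \<infinity>} = (\<Union>x\<in>UNIV. ?A x)"
    by (auto simp: space_M Ev_tau)
  have "emeasure ?M (\<Union>x\<in>UNIV. ?A x) = (\<integral>\<^sup>+x. emeasure ?M (?A x) \<partial>count_space UNIV)"
    by (rule emeasure_UN_countable) (auto simp: As disjoint_family_on_def Ev_tau)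
  also have "\<dots> = (\<integral>\<^sup>+x. ennreal (pmf \<mu> x) \<partial>count_space UNIV)"
    by (simp add: emA)
  also have "\<dots> = 1"
    by (simp add: nn_integral_pmf measure_pmf.emeasure_space_1[simplified])
  finally have e1: "emeasure ?M {\<omega>\<in>space ?M. tau_r \<omega> \<noteq> \<infinity>} = 1" using B by simp
  have Bs: "{\<omega>\<in>space ?M. tau_r \<omega> \<noteq> \<infinity>} \<in> sets ?M" using B As by auto
  have "emeasure ?M (space ?M - {\<omega>\<in>space ?M. tau_r \<omega> \<noteq> \<infinity>}) = 0"
    using emeasure_compl[OF Bs] e1 ps.emeasure_space_1 by simp
  then have "space ?M - {\<omega>\<in>space ?M. tau_r \<omega> \<noteq> \<infinity>} \<in> null_sets ?M"
    using Bs by auto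
  then show ?thesis by (rule AE_I') auto
qed

lemma em_stop: "emeasure (srw_xi_space (rr \<mu>)) {\<omega> \<in> space (srw_xi_space (rr \<mu>)). stopped_walk \<omega> t = z}
    = ennreal (nu (rr \<mu>) t z)"
proof -
  let ?M = "srw_xi_space (rr \<mu>)"
  have d: "(\<Union>u\<in>{..t}. Ev u z False) \<inter> Ev t z True = {}"
    by (auto simp: Ev_tau Ev_True)
  have "emeasure ?M ((\<Union>u\<in>{..t}. Ev u z False) \<union> Ev t z True)
      = emeasure ?M (\<Union>u\<in>{..t}. Ev u z False) + emeasure ?M (Ev t z True)"
    by (rule plus_emeasure[symmetric]) (use Ev_sets d in auto)
  also have "emeasure ?M (\<Union>u\<in>{..t}. Ev u z False) = (\<Sum>u\<le>t. emeasure ?M (Ev u z False))"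
    by (rule sum_emeasure[symmetric]) (auto simp: Ev_sets disjoint_family_on_def Ev_tau)
  also have "\<dots> = (\<Sum>u\<le>t. ennreal (av (rr \<mu>) u z * rr \<mu> z))"
    by (simp add: emeasure_Ev r01')
  also have "\<dots> = ennreal (\<Sum>u\<le>t. av (rr \<mu>) u z * rr \<mu> z)"
    using av_nonneg[of "rr \<mu>"] r01' by (intro sum_ennreal) auto
  also have "emeasure ?M (Ev t z True) = ennreal (bb (rr \<mu>) t z)"
    by (simp add: emeasure_Ev r01' bb_def mult.commute)
  also have "ennreal (\<Sum>u\<le>t. av (rr \<mu>) u z * rr \<mu> z) + ennreal (bb (rr \<mu>) t z) = ennreal (nu (rr \<mu>) t z)"
    unfolding nu_def using av_nonneg[of "rr \<mu>"] r01' bb_nonneg[of "rr \<mu>"]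
    by (intro ennreal_plus[symmetric] sum_nonneg mult_nonneg_nonneg) auto
  finally show ?thesis by (simp add: stop_eq)
qed

lemma part_UI: "unif_integrable (srw_xi_space (rr \<mu>)) (\<lambda>t \<omega>. real_of_int (stopped_walk \<omega> t))"
  unfolding unif_integrable_def
proof (intro allI impI)
  fix e :: real assume e: "e > 0"
  have "(\<lambda>n. hh \<mu> (int n) + hh \<mu> (- int n)) \<longlonglongrightarrow> 0 + 0"
    by (intro tendsto_add hh_lim1[OF mz] hh_lim2[OF mz])
  then have "eventually (\<lambda>n. hh \<mu> (int n) + hh \<mu> (- int n) < e) sequentially"
    using e by (simp add: order_tendstoD(2))
  then obtain n where n: "hh \<mu> (int n) + hh \<mu> (- int n) < e" using eventually_sequentially by auto
  show "\<exists>K. \<forall>t. (\<integral>\<^sup>+ \<omega>. ennreal \<bar>real_of_int (stopped_walk \<omega> t)\<bar> * indicator {\<omega>. K < \<bar>real_of_int (stopped_walk \<omega> t)\<bar>} \<omega> \<partial>srw_xi_space (rr \<mu>)) < ennreal e"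
  proof (intro exI allI)
    fix t
    let ?M = "srw_xi_space (rr \<mu>)"
    let ?W = "{-int (Suc t)..int (Suc t)}"
    define Fk where "Fk z = ennreal (\<bar>real_of_int z\<bar> * (if 2 * real n < \<bar>real_of_int z\<bar> then 1 else 0))" for z :: int
    have "(\<integral>\<^sup>+ \<omega>. ennreal \<bar>real_of_int (stopped_walk \<omega> t)\<bar> * indicator {\<omega>. 2 * real n < \<bar>real_of_int (stopped_walk \<omega> t)\<bar>} \<omega> \<partial>?M)
        = (\<integral>\<^sup>+ \<omega>. Fk (stopped_walk \<omega> t) \<partial>?M)"
      by (intro nn_integral_cong) (simp add: Fk_def indicator_def)
    also have "\<dots> = (\<integral>\<^sup>+z. Fk z * emeasure ?M {\<omega>\<in>space ?M. stopped_walk \<omega> t = z} \<partial>count_space UNIV)"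
      by (rule nn_int_countable[OF m_stop])
    also have "\<dots> = (\<integral>\<^sup>+z. Fk z * ennreal (nu (rr \<mu>) t z) \<partial>count_space UNIV)"
      by (simp add: em_stop)
    also have "\<dots> = (\<Sum>z\<in>?W. Fk z * ennreal (nu (rr \<mu>) t z))"
      by (rule nn_count_finite) (auto simp: nu_supp)
    also have "\<dots> = ennreal (\<Sum>z\<in>?W. \<bar>real_of_int z\<bar> * (if 2 * real n < \<bar>real_of_int z\<bar> then 1 else 0) * nu (rr \<mu>) t z)"
      unfolding Fk_def using nu_nonneg[of "rr \<mu>"] r01'
      by (subst sum_ennreal[symmetric]) (auto simp: ennreal_mult[symmetric] intro!: sum.cong)
    also have "\<dots> \<le> ennreal (hh \<mu> (int n) + hh \<mu> (- int n))"
      by (intro ennreal_leI tail_bound[OF mz])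
    also have "\<dots> < ennreal e"
      using n e hh_nonneg[OF mz] by (subst ennreal_less_iff) auto
    finally show "(\<integral>\<^sup>+ \<omega>. ennreal \<bar>real_of_int (stopped_walk \<omega> t)\<bar> * indicator {\<omega>. 2 * real n < \<bar>real_of_int (stopped_walk \<omega> t)\<bar>} \<omega> \<partial>?M) < ennreal e" .
  qed
qed

end

theorem theorem1:
  fixes \<mu> :: "int pmf"
  assumes "mean_zero_int \<mu>"
  shows "\<exists>r :: int \<Rightarrow> real. (\<forall>x. 0 \<le> r x \<and> r x \<le> 1) \<and>
    (AE \<omega> in srw_xi_space r. tau_r \<omega> \<noteq> \<infinity>) \<and>
    (\<forall>x. measure (srw_xi_space r)
            {\<omega> \<in> space (srw_xi_space r). tau_r \<omega> \<noteq> \<infinity> \<and> walk \<omega> (the_enat (tau_r \<omega>)) = x}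
          = pmf \<mu> x) \<and>
    unif_integrable (srw_xi_space r) (\<lambda>t \<omega>. real_of_int (stopped_walk \<omega> t))"
  using r01'[OF assms] part_AE[OF assms] part_measure[OF assms] part_UI[OF assms]
  by blast

end
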